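(* Let $\gamma$ be the Euler–Mascheroni constant and $\lambda(s)=\sum_{n\ge0}(2n+1)^{-s}$ (for real $s>1$). Then $$\lim_{x\to\infty}\left\{\lambda(\lambda(x))-\frac12\left[3^x-\Bigl(\frac95\Bigr)^x-\Bigl(\frac97\Bigr)^x+\Bigl(\frac{27}{25}\Bigr)^x-1\right]\right\}=\frac12(\gamma+\ln2).$$ *)

theory Defs
  imports "HOL-Analysis.Analysis"
begin

definition dirichlet_lambda :: "real \<Rightarrow> real" where
  "dirichlet_lambda s = (\<Sum>n. 1 / (2 * real n + 1) powr s)"

end

theory Submission imports Defs begin

definition T :: "real \<Rightarrow> real \<Rightarrow> real" where
  "T c x = (\<Sum>n. (c/(c+2*real n)) powr x)"

lemma powr_base_lt1_tendsto:
  fixes q :: real assumes "0 < q" "q < 1"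
  shows "((\<lambda>x. q powr x) \<longlongrightarrow> 0) at_top"
proof -
  have "ln q < 0" using assms by simp
  have "filterlim (\<lambda>x. (-ln q) * x) at_top at_top"
    by (rule filterlim_tendsto_pos_mult_at_top[OF tendsto_const]) (use \<open>ln q < 0\<close> in \<open>auto intro: filterlim_ident\<close>)
  hence "filterlim (\<lambda>x. x * ln q) at_bot at_top"
    unfolding filterlim_uminus_at_bot by (simp add: mult.commute)
  hence "((\<lambda>x. exp (x * ln q)) \<longlongrightarrow> 0) at_top"
    by (rule filterlim_compose[OF exp_at_bot])
  thus ?thesis using assms by (simp add: powr_def mult.commute)
qed

lemma T_summable:
  assumes "c > 0" "x > 1"
  shows "summable (\<lambda>n. (c/(c+2*real n)) powr x)"
proof (rule summable_comparison_test'[where N=1])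
  show "summable (\<lambda>n. c powr x * real n powr (-x))"
    using assms by (intro summable_mult) (simp add: summable_real_powr_iff)
  fix n :: nat assume "n \<ge> 1"
  hence "real n > 0" by simp
  have "(c/(c+2*real n)) powr x = c powr x / (c+2*real n) powr x"
    using assms by (simp add: powr_divide)
  also have "\<dots> \<le> c powr x / real n powr x"
    using assms \<open>real n > 0\<close>
    by (intro divide_left_mono powr_mono2 mult_pos_pos) auto
  also have "\<dots> = c powr x * real n powr (-x)" by (simp add: powr_minus_divide)
  finally show "norm ((c/(c+2*real n)) powr x) \<le> c powr x * real n powr (-x)" by simp
qed

lemma T_split:
  assumes "c > 0" "x > 1"
  shows "T c x = 1 + (c/(c+2)) powr x * T (c+2) x"
proof -
  have s: "summable (\<lambda>n. (c/(c+2*real n)) powr x)" using T_summable assms by blast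
  have "(\<Sum>n. (c/(c+2*real (Suc n))) powr x) = T c x - 1"
    using suminf_split_head[OF s] assms unfolding T_def by simp
  moreover have "(\<lambda>n. (c/(c+2*real (Suc n))) powr x) = (\<lambda>n. (c/(c+2)) powr x * ((c+2)/(c+2+2*real n)) powr x)"
  proof
    fix n
    have e: "c+2*real (Suc n) = c+2+2*real n" by simp
    have p: "c+2+2*real n > 0" "c+2>0" using assms by auto
    have m: "c/(c+2+2*real n) = (c/(c+2)) * ((c+2)/(c+2+2*real n))"
      using p by simp
    show "(c/(c+2*real (Suc n))) powr x = (c/(c+2)) powr x * ((c+2)/(c+2+2*real n)) powr x"
      unfolding e m by (rule powr_mult)
  qed
  moreover have "(\<Sum>n. (c/(c+2)) powr x * ((c+2)/(c+2+2*real n)) powr x) = (c/(c+2)) powr x * T (c+2) x"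
    unfolding T_def by (rule suminf_mult) (use T_summable[of "c+2" x] assms in simp)
  ultimately show ?thesis by simp
qed

lemma T_nonneg: "0 \<le> T c x" if "c > 0" "x > 1"
  unfolding T_def using T_summable[OF that] by (intro suminf_nonneg) auto

lemma T_mono:
  assumes "c > 0" "x \<ge> 2"
  shows "T c x \<le> T c 2"
  unfolding T_def
proof (rule suminf_le)
  fix n
  have "0 \<le> c/(c+2*real n)" "c/(c+2*real n) \<le> 1" using assms by auto
  thus "(c/(c+2*real n)) powr x \<le> (c/(c+2*real n)) powr 2"
    using assms by (intro powr_mono') auto
qed (use T_summable[of c x] T_summable[of c 2] assms in auto)

lemma T_lim:
  assumes "c > 0"
  shows "(T c \<longlongrightarrow> 1) at_top"
proof -
  define q where "q = c/(c+2)"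
  have q: "0 < q" "q < 1" using assms by (auto simp: q_def)
  define K where "K = T (c+2) 2"
  have lo: "\<forall>\<^sub>F x in at_top. 1 \<le> T c x"
    using eventually_gt_at_top[of 1]
  proof eventually_elim
    case (elim x)
    have "T c x = 1 + (c/(c+2)) powr x * T (c+2) x" using T_split[of c x] assms elim by simp
    moreover have "0 \<le> (c/(c+2)) powr x * T (c+2) x" using T_nonneg[of "c+2" x] assms elim by simp
    ultimately show ?case by linarith
  qed
  have hi: "\<forall>\<^sub>F x in at_top. T c x \<le> 1 + q powr x * K"
    using eventually_ge_at_top[of 2]
  proof eventually_elim
    case (elim x)
    have "T c x = 1 + q powr x * T (c+2) x" using T_split[of c x] assms elim by (simp add: q_def)
    also have "\<dots> \<le> 1 + q powr x * K" unfolding K_def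
      using T_mono[of "c+2" x] assms elim by (intro add_left_mono mult_left_mono) auto
    finally show ?case .
  qed
  have "((\<lambda>x. 1 + q powr x * K) \<longlongrightarrow> 1 + 0 * K) at_top"
    by (intro tendsto_intros powr_base_lt1_tendsto q)
  hence "((\<lambda>x. 1 + q powr x * K) \<longlongrightarrow> 1) at_top" by simp
  thus ?thesis by (rule tendsto_sandwich[OF lo hi tendsto_const])
qed


lemma lambda_T: "dirichlet_lambda x = T 1 x"
  unfolding dirichlet_lambda_def T_def by (simp add: powr_divide add.commute)

lemma pw: fixes x :: real shows
  "(9/5) powr x = (3 powr x)^2 / 5 powr x"
  "(9/7) powr x = (3 powr x)^2 / 7 powr x"
  "(27/25) powr x = (3 powr x)^3 / (5 powr x)^2"
  "(3/5) powr x = 3 powr x / 5 powr x"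
  "(3/7) powr x = 3 powr x / 7 powr x"
  "(5/7) powr x = 5 powr x / 7 powr x"
  "(7/9) powr x = 7 powr x / (3 powr x)^2"
  "(27/35) powr x = (3 powr x)^3 / (5 powr x * 7 powr x)"
  "(27/49) powr x = (3 powr x)^3 / (7 powr x)^2"
  "(81/125) powr x = (3 powr x)^4 / (5 powr x)^3"
  "(81/175) powr x = (3 powr x)^4 / ((5 powr x)^2 * 7 powr x)"
  "(9/25) powr x = (3 powr x)^2 / (5 powr x)^2"
  by (simp_all add: powr_divide[symmetric] powr_mult[symmetric] power2_eq_square power3_eq_cube power4_eq_xxxx)

lemma pw13: "(1/3) powr x = 1 / 3 powr (x::real)" by (simp add: powr_divide)

lemma lambda_decomp:
  assumes "x > 1"
  shows "dirichlet_lambda x - 1 = (1 + (3/5) powr x + (3/7) powr x + (1/3) powr x * T 9 x) / 3 powr x"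
proof -
  have s1: "T 1 x = 1 + (1/3) powr x * T 3 x" using T_split[of 1 x] assms by simp
  have s3: "T 3 x = 1 + (3/5) powr x * T 5 x" using T_split[of 3 x] assms by simp
  have s5: "T 5 x = 1 + (5/7) powr x * T 7 x" using T_split[of 5 x] assms by simp
  have s7: "T 7 x = 1 + (7/9) powr x * T 9 x" using T_split[of 7 x] assms by simp
  have p: "3 powr x > 0" "5 powr x > 0" "7 powr x > 0" by auto
  show ?thesis unfolding lambda_T s1 s3 s5 s7 pw pw13 using p
    by (simp add: field_simps power2_eq_square)
qed


lemma algC:
  fixes P Q R t :: real
  assumes "P > 0" "Q > 0" "R > 0" "t \<ge> 0"
  shows "(1 - t + 2 * (P^3/(Q*R)) + P/Q * t + P^3/R^2 + P/R * t - P^4/Q^3 - P^4/(Q^2*R) - P^2/Q^2 * t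
          + P/Q + P/R + 1/P * t) / (2 * (1 + (P/Q + P/R + 1/P * t)))
       = 1/(2*((1 + P/Q + P/R + 1/P * t)/P)) - 1/2 * (P - P^2/Q - P^2/R + P^3/Q^2 - 1)"
proof -
  obtain D where D: "D = P*Q*R + P*P*R + P*P*Q + Q*R*t" by blast
  have d': "D > 0" unfolding D using assms by (intro add_pos_nonneg) auto
  have e: "1 + P/Q + P/R + 1/P * t = D / (P*Q*R)"
    using assms unfolding D by (simp add: field_simps)
  have e2: "1 + (P/Q + P/R + 1/P * t) = D / (P*Q*R)" using e by (simp add: add.assoc)
  define NN where "NN = 1 - t + 2 * (P^3/(Q*R)) + P/Q * t + P^3/R^2 + P/R * t - P^4/Q^3 - P^4/(Q^2*R) - P^2/Q^2 * t
          + P/Q + P/R + 1/P * t"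
  define W where "W = P - P^2/Q - P^2/R + P^3/Q^2 - 1"
  have "NN / (2 * (D / (P*Q*R))) = 1/(2*((D / (P*Q*R))/P)) - 1/2 * W"
    using assms d' unfolding NN_def W_def
    apply (simp add: field_simps power2_eq_square power3_eq_cube power4_eq_xxxx)
    apply (simp add: D algebra_simps)
    done
  thus ?thesis unfolding NN_def[symmetric] W_def[symmetric] e e2 .
qed

lemma partC:
  "((\<lambda>x. 1/(2*(dirichlet_lambda x - 1)) - 1/2 * (3 powr x - (9/5) powr x - (9/7) powr x + (27/25) powr x - 1))
     \<longlongrightarrow> 0) at_top"
proof -
  define u where "u = (\<lambda>x::real. (3/5) powr x + (3/7) powr x + (1/3) powr x * T 9 x)"
  define N where "N = (\<lambda>x::real. 1 - T 9 x + 2 * (27/35) powr x + (3/5) powr x * T 9 x + (27/49) powr x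
       + (3/7) powr x * T 9 x - (81/125) powr x - (81/175) powr x - (9/25) powr x * T 9 x
       + (3/5) powr x + (3/7) powr x + (1/3) powr x * T 9 x)"
  have ev: "\<forall>\<^sub>F x in at_top. N x / (2 * (1 + u x)) =
     1/(2*(dirichlet_lambda x - 1)) - 1/2 * (3 powr x - (9/5) powr x - (9/7) powr x + (27/25) powr x - 1)"
    using eventually_gt_at_top[of 1]
  proof eventually_elim
    case (elim x)
    have p: "3 powr x > 0" "5 powr x > 0" "7 powr x > 0" by auto
    have t: "T 9 x \<ge> 0" using T_nonneg[of 9 x] elim by simp
    have "1 + (3 powr x / 5 powr x + 3 powr x / 7 powr x + 1 / 3 powr x * T 9 x) > 0"
      using p t by (intro add_pos_nonneg) auto
    thus ?case unfolding lambda_decomp[OF elim] N_def u_def pw pw13 using algC[OF p t]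
      by (simp add: add.assoc)
  qed
  have T9: "(T 9 \<longlongrightarrow> 1) at_top" by (rule T_lim) simp
  have l: "((\<lambda>x. (r::real) powr x) \<longlongrightarrow> 0) at_top" if "0 < r" "r < 1" for r
    using powr_base_lt1_tendsto that by blast
  have "(N \<longlongrightarrow> 1 - 1 + 2 * 0 + 0 * 1 + 0 + 0 * 1 - 0 - 0 - 0 * 1 + 0 + 0 + 0 * 1) at_top"
    unfolding N_def by (intro tendsto_intros T9 l) auto
  moreover have "(u \<longlongrightarrow> 0 + 0 + 0 * 1) at_top"
    unfolding u_def by (intro tendsto_intros T9 l) auto
  ultimately have "((\<lambda>x. N x / (2 * (1 + u x))) \<longlongrightarrow> 0 / (2 * (1 + (0 + 0 + 0 * 1)))) at_top"
    by (intro tendsto_intros) auto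
  hence "((\<lambda>x. N x / (2 * (1 + u x))) \<longlongrightarrow> 0) at_top" by simp
  thus ?thesis using ev by (rule Lim_transform_eventually)
qed


lemma boundA:
  fixes a s :: real
  assumes a: "a \<ge> 1" and s: "1 < s" "s \<le> 2"
  shows "0 \<le> a powr (-s) - (a powr (1-s) - (a+2) powr (1-s)) / (2*(s-1))"
    and "a powr (-s) - (a powr (1-s) - (a+2) powr (1-s)) / (2*(s-1)) \<le> 4 / a^2"
proof -
  have "\<exists>z. a < z \<and> z < a+2 \<and> (a+2) powr (1-s) - a powr (1-s) = (a+2-a) * ((1-s) * z powr ((1-s)-1))"
    by (rule MVT2[where f="\<lambda>u. u powr (1-s)" and f'="\<lambda>u. (1-s) * u powr ((1-s)-1)"])
       (simp, rule has_real_derivative_powr, use a in linarith)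
  then obtain \<xi> where xi: "a < \<xi>" "\<xi> < a+2"
    and eq1: "(a+2) powr (1-s) - a powr (1-s) = (a+2-a) * ((1-s) * \<xi> powr ((1-s)-1))" by blast
  have "\<exists>z. a < z \<and> z < a+2 \<and> (a+2) powr (-s) - a powr (-s) = (a+2-a) * ((-s) * z powr ((-s)-1))"
    by (rule MVT2[where f="\<lambda>u. u powr (-s)" and f'="\<lambda>u. (-s) * u powr ((-s)-1)"])
       (simp, rule has_real_derivative_powr, use a in linarith)
  then obtain \<eta> where eta: "a < \<eta>" "\<eta> < a+2"
    and eq2: "(a+2) powr (-s) - a powr (-s) = (a+2-a) * ((-s) * \<eta> powr ((-s)-1))" by blast
  have br: "(a powr (1-s) - (a+2) powr (1-s)) / (2*(s-1)) = \<xi> powr (-s)"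
  proof -
    have "a powr (1-s) - (a+2) powr (1-s) = 2*(s-1) * \<xi> powr (-s)"
      using eq1 by (simp add: algebra_simps)
    thus ?thesis using s by simp
  qed
  have m1: "\<xi> powr (-s) \<le> a powr (-s)" using xi a s by (intro powr_mono2') auto
  have m2: "(a+2) powr (-s) \<le> \<xi> powr (-s)" using xi a s by (intro powr_mono2') auto
  show "0 \<le> a powr (-s) - (a powr (1-s) - (a+2) powr (1-s)) / (2*(s-1))"
    unfolding br using m1 by simp
  have "a powr (-s) - (a powr (1-s) - (a+2) powr (1-s)) / (2*(s-1)) \<le> a powr (-s) - (a+2) powr (-s)"
    unfolding br using m2 by simp
  also have "\<dots> = 2 * s * \<eta> powr (-s-1)" using eq2 by (simp add: algebra_simps)
  also have "\<dots> \<le> 2 * 2 * \<eta> powr (-2)"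
  proof (intro mult_mono)
    show "\<eta> powr (-s-1) \<le> \<eta> powr (-2)" using eta a s by (intro powr_mono) auto
  qed (use s in auto)
  also have "\<dots> \<le> 2 * 2 * a powr (-2)"
    using eta a by (intro mult_left_mono powr_mono2') auto
  also have "\<dots> = 4 / a^2" using a by (simp add: powr_minus_divide)
  finally show "a powr (-s) - (a powr (1-s) - (a+2) powr (1-s)) / (2*(s-1)) \<le> 4 / a^2" .
qed


definition fA :: "nat \<Rightarrow> real \<Rightarrow> real" where
  "fA n s = 1/(2*real n+1) powr s - ((2*real n+1) powr (1-s) - (2*real n+3) powr (1-s))/(2*(s-1))"

definition LA :: "nat \<Rightarrow> real" where
  "LA n = 1/(2*real n+1) - (ln (2*real n+3) - ln (2*real n+1))/2"

lemma fA_bound: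
  assumes "s \<in> {1<..2}"
  shows "norm (fA n s) \<le> 4/(2*real n+1)^2"
proof -
  have e: "2*real n+1+2 = 2*real n+3" by simp
  have "1/(2*real n+1) powr s = (2*real n+1) powr (-s)" by (simp add: powr_minus_divide)
  thus ?thesis using boundA[of "2*real n+1" s] assms unfolding fA_def e by auto
qed

lemma sumM: "summable (\<lambda>n. 4/(2*real n+1)^2)"
proof (rule summable_comparison_test'[where N=0])
  have "summable (\<lambda>n. inverse (real n ^ 2))" by (rule inverse_power_summable) simp
  hence "summable (\<lambda>n. inverse (real (Suc n) ^ 2))" by (subst summable_Suc_iff)
  thus "summable (\<lambda>n. 4 * inverse (real (Suc n) ^ 2))" by (rule summable_mult)
  fix n :: nat
  have "real (Suc n) ^ 2 \<le> (2*real n+1)^2" by (intro power_mono) auto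
  hence "4/(2*real n+1)^2 \<le> 4 / real (Suc n) ^ 2" by (intro divide_left_mono) auto
  thus "norm (4/(2*real n+1)^2) \<le> 4 * inverse (real (Suc n) ^ 2)" by (simp add: divide_inverse)
qed

lemma tele:
  assumes "s > 1"
  shows "(\<lambda>n. ((2*real n+1) powr (1-s) - (2*real n+3) powr (1-s))/(2*(s-1))) sums (1/(2*(s-1)))"
proof -
  define g where "g = (\<lambda>n::nat. (2*real n+1) powr (1-s))"
  have "filterlim (\<lambda>n::nat. 2*real n+1) at_top sequentially"
    by (rule filterlim_at_top_mono[OF filterlim_real_sequentially]) auto
  hence "g \<longlonglongrightarrow> 0" unfolding g_def using assms by (intro tendsto_neg_powr) auto
  hence "(\<lambda>n. g n - g (Suc n)) sums (g 0 - 0)" by (rule telescope_sums')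
  moreover have "(\<lambda>n. g n - g (Suc n)) = (\<lambda>n. (2*real n+1) powr (1-s) - (2*real n+3) powr (1-s))"
    unfolding g_def by (auto simp: algebra_simps)
  ultimately have "(\<lambda>n. (2*real n+1) powr (1-s) - (2*real n+3) powr (1-s)) sums 1"
    by (simp add: g_def)
  from sums_divide[OF this, of "2*(s-1)"] show ?thesis by simp
qed

lemma lam_eq:
  assumes "s > 1"
  shows "dirichlet_lambda s - 1/(2*(s-1)) = (\<Sum>n. fA n s)"
proof -
  have "summable (\<lambda>n. (1/(1+2*real n)) powr s)" using T_summable[of 1 s] assms by simp
  hence "summable (\<lambda>n. 1/(2*real n+1) powr s)" by (simp add: powr_divide add.commute)
  hence "(\<lambda>n. 1/(2*real n+1) powr s) sums dirichlet_lambda s"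
    unfolding dirichlet_lambda_def by (rule summable_sums)
  from sums_diff[OF this tele[OF assms]] show ?thesis
    unfolding fA_def by (rule sums_unique)
qed

lemma fA_lim: "((\<lambda>s. fA n s) \<longlongrightarrow> LA n) (at 1 within S)"
proof -
  define a where "a = 2*real n+1"
  define b where "b = 2*real n+3"
  have ab: "a > 0" "b > 0" by (auto simp: a_def b_def)
  define F where "F = (\<lambda>t::real. a powr (1-t) - b powr (1-t))"
  have d: "((\<lambda>t. c powr (1-t)) has_real_derivative (- ln c)) (at 1 within S)" if "c > 0" for c :: real
  proof -
    have "DERIV (\<lambda>t. (\<lambda>_. c) t powr (\<lambda>t. 1-t) t) 1 :> ((\<lambda>_. c) 1 powr (\<lambda>t. 1-t) 1) * ((-1) * ln ((\<lambda>_. c) 1) + 0 * (\<lambda>t. 1-t) 1 / (\<lambda>_. c) 1)"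
      by (rule DERIV_powr) (use that in \<open>auto intro!: derivative_eq_intros\<close>)
    hence "DERIV (\<lambda>t. c powr (1-t)) 1 :> - ln c" using that by simp
    thus ?thesis by (rule has_field_derivative_at_within)
  qed
  have "(F has_real_derivative (- ln a - - ln b)) (at 1 within S)"
    unfolding F_def using ab by (intro DERIV_diff d)
  hence "(F has_real_derivative (ln b - ln a)) (at 1 within S)" by simp
  hence "((\<lambda>t. (F t - F 1)/(t-1)) \<longlongrightarrow> ln b - ln a) (at 1 within S)"
    by (simp add: has_field_derivative_iff)
  hence "((\<lambda>t. 1/a powr t - ((F t - F 1)/(t-1))/2) \<longlongrightarrow> 1/a powr 1 - (ln b - ln a)/2) (at 1 within S)"
    using ab by (intro tendsto_intros) auto
  moreover have "(\<lambda>t. 1/a powr t - ((F t - F 1)/(t-1))/2) = (\<lambda>s. fA n s)"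
    by (auto simp: fA_def F_def a_def b_def)
  moreover have "1/a powr 1 - (ln b - ln a)/2 = LA n" using ab by (simp add: LA_def a_def b_def)
  ultimately show ?thesis by simp
qed


lemma oddsum: "(\<Sum>n<N. 1/(2*real n+1)) = harm (2*N) - harm N / 2"
proof (induction N)
  case 0 thus ?case by (simp add: harm_def)
next
  case (Suc N)
  have h: "harm (2 * Suc N) = harm (2*N) + inverse (real (2*N+1)) + inverse (real (2*N+2))"
    by (simp add: harm_Suc)
  have k0: "real (2*N+2) = 2 * real (Suc N)" by simp
  have k1: "inverse (real (2*N+2)) = inverse (real (Suc N))/2"
    unfolding k0 by (simp add: field_simps)
  have k2: "inverse (real (2*N+1)) = 1/(2*real N+1)" by (simp add: divide_inverse)
  have "(\<Sum>n<Suc N. 1/(2*real n+1)) = harm (2*N) - harm N/2 + 1/(2*real N+1)" using Suc by simp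
  also have "\<dots> = harm (2*Suc N) - harm (Suc N)/2" unfolding h harm_Suc[of N] k1 k2 by (simp add: diff_divide_distrib add_divide_distrib)
  finally show ?case .
qed

lemma lnsum: "(\<Sum>n<N. ln (2*real n+3) - ln (2*real n+1)) = ln (2*real N+1)"
proof -
  have "(\<Sum>n<N. ln (2*real n+3) - ln (2*real n+1)) = (\<Sum>n<N. ln (2*real (Suc n)+1) - ln (2*real n+1))"
    by (intro sum.cong) (auto simp: algebra_simps)
  also have "\<dots> = ln (2*real N+1)" by (subst sum_lessThan_telescope) simp
  finally show ?thesis .
qed

lemma LA_lim: "(\<lambda>N. \<Sum>n<N. LA n) \<longlonglongrightarrow> (euler_mascheroni + ln 2)/2"
proof -
  have sm: "strict_mono (\<lambda>N::nat. 2*N)" by (auto simp: strict_mono_def)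
  have h2: "(\<lambda>N. harm (2*N) - ln (real (2*N)) :: real) \<longlonglongrightarrow> euler_mascheroni"
    using LIMSEQ_subseq_LIMSEQ[OF euler_mascheroni_LIMSEQ sm] by (simp add: comp_def)
  have "filterlim (\<lambda>N::nat. 2*real N) at_top sequentially"
    by (rule filterlim_at_top_mono[OF filterlim_real_sequentially]) auto
  hence i0: "(\<lambda>N::nat. inverse (2*real N)) \<longlonglongrightarrow> 0" by (rule tendsto_inverse_0_at_top)
  have i: "(\<lambda>N::nat. ln (1 + inverse (2*real N))) \<longlonglongrightarrow> ln (1 + 0)"
    by (intro tendsto_intros i0) auto
  have lim: "(\<lambda>N. (harm (2*N) - ln (real (2*N))) - (harm N - ln (real N))/2 + ln 2/2
              - ln (1 + inverse (2*real N))/2) \<longlonglongrightarrow>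
      euler_mascheroni - euler_mascheroni/2 + ln 2/2 - ln (1+0)/2"
    by (intro tendsto_intros h2 euler_mascheroni_LIMSEQ i0) auto
  have ev: "\<forall>\<^sub>F N in sequentially. (harm (2*N) - ln (real (2*N))) - (harm N - ln (real N))/2 + ln 2/2
              - ln (1 + inverse (2*real N))/2 = (\<Sum>n<N. LA n)"
    using eventually_gt_at_top[of "0::nat"]
  proof eventually_elim
    case (elim N)
    have p: "real N > 0" using elim by simp
    have "(\<Sum>n<N. LA n) = harm (2*N) - harm N / 2 - ln (2*real N+1)/2"
    proof -
      have "(\<Sum>n<N. LA n) = (\<Sum>n<N. 1/(2*real n+1)) - (\<Sum>n<N. ln (2*real n+3) - ln (2*real n+1))/2"
        unfolding LA_def by (simp add: sum_divide_distrib diff_divide_distrib sum_subtractf)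
      thus ?thesis unfolding oddsum lnsum .
    qed
    moreover have "ln (real (2*N)) = ln 2 + ln (real N)" using p by (simp add: ln_mult)
    moreover have "1 + inverse (2*real N) = (2*real N+1)/(2*real N)" using p by (simp add: field_simps)
    moreover have "ln ((2*real N+1)/(2*real N)) = ln (2*real N+1) - ln 2 - ln (real N)"
      using p by (simp add: ln_div ln_mult)
    ultimately show ?case by (simp add: field_simps)
  qed
  show ?thesis using Lim_transform_eventually[OF lim ev] by (simp add: add_divide_distrib)
qed


lemma partA:
  "((\<lambda>s. dirichlet_lambda s - 1/(2*(s-1))) \<longlongrightarrow> (euler_mascheroni + ln 2)/2) (at 1 within {1<..2})"
proof -
  have u: "uniform_limit {1<..2} (\<lambda>N s. \<Sum>n<N. fA n s) (\<lambda>s. \<Sum>n. fA n s) sequentially"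
    by (rule Weierstrass_m_test[OF fA_bound sumM])
  have "((\<lambda>s. \<Sum>n. fA n s) \<longlongrightarrow> (euler_mascheroni + ln 2)/2) (at 1 within {1<..2})"
    by (rule swap_uniform_limit[OF _ LA_lim u]) (auto intro!: always_eventually tendsto_sum fA_lim)
  moreover have "\<forall>\<^sub>F s in at 1 within {1<..2}. (\<Sum>n. fA n s) = dirichlet_lambda s - 1/(2*(s-1))"
    unfolding eventually_at_filter by (intro always_eventually) (auto simp del: diff_divide_distrib simp add: lam_eq[symmetric])
  ultimately show ?thesis by (rule Lim_transform_eventually)
qed

theorem mainTheorem13:
  shows "((\<lambda>x::real. dirichlet_lambda (dirichlet_lambda x)
            - 1/2 * (3 powr x - (9/5) powr x - (9/7) powr x + (27/25) powr x - 1))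
          \<longlongrightarrow> 1/2 * (euler_mascheroni + ln 2)) at_top"
proof -
  have l1: "(dirichlet_lambda \<longlongrightarrow> 1) at_top"
    using T_lim[of 1] by (simp add: lambda_T[abs_def])
  have gt: "\<forall>\<^sub>F x in at_top. dirichlet_lambda x > 1"
    using eventually_gt_at_top[of 1]
  proof eventually_elim
    case (elim x)
    have "0 \<le> (1/3) powr x * T 9 x" using T_nonneg[of 9 x] elim by simp
    hence "0 < (1 + (3/5) powr x + (3/7) powr x + (1/3) powr x * T 9 x) / 3 powr x"
      by (intro divide_pos_pos add_pos_nonneg) auto
    thus ?case using lambda_decomp[OF elim] by simp
  qed
  have lt: "\<forall>\<^sub>F x in at_top. dirichlet_lambda x < 2"
    using order_tendstoD(2)[OF l1, of 2] by simp
  have fl: "filterlim dirichlet_lambda (at 1 within {1<..2}) at_top"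
    unfolding filterlim_at using gt lt l1 by (auto elim: eventually_elim2)
  have A: "((\<lambda>x. dirichlet_lambda (dirichlet_lambda x) - 1/(2*(dirichlet_lambda x - 1)))
      \<longlongrightarrow> (euler_mascheroni + ln 2)/2) at_top"
    using filterlim_compose[OF partA fl] .
  have "((\<lambda>x. (dirichlet_lambda (dirichlet_lambda x) - 1/(2*(dirichlet_lambda x - 1)))
      + (1/(2*(dirichlet_lambda x - 1)) - 1/2 * (3 powr x - (9/5) powr x - (9/7) powr x + (27/25) powr x - 1)))
      \<longlongrightarrow> (euler_mascheroni + ln 2)/2 + 0) at_top"
    by (rule tendsto_add[OF A partC])
  thus ?thesis by simp
qed

end
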